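(* Fix $\beta>0$ and a transient MDP with a sink state as in the context. There exists $\pi^\star\in\Pi_{\mathrm{SD}}$ such that $\bm v^{\infty,\star}=\bm v^{\infty}(\pi^\star)$ and \[ g^\star_\infty(\beta)=\mathrm{ERM}^{\bm\mu}_\beta\big[v^{\infty,\star}_{\tilde s_0}\big]=\max_{\pi\in\Pi_{\mathrm{SD}}}\mathrm{ERM}^{\bm\mu}_\beta\big[v^{\infty}_{\tilde s_0}(\pi)\big], \] where $\tilde s_0\sim\mu$ (quantities may take the value $-\infty$).
   Context: MDP: states $\bar{\mathcal S}=\{1,\dots,S,S+1\}$, $e:=S+1$ a sink state, $\mathcal S=\{1,\dots,S\}$; finite actions $\mathcal A$; transitions $p(s,a,s')$, real rewards $r(s,a,s')$ of arbitrary sign; $p(e,a,e)=1$, $r(e,a,e)=0$; initial distribution $\mu$ on $\mathcal S$ (never starting at $e$) with $\mu>0$ componentwise. Policy classes: $\Pi_{\mathrm{HR}}$ (history-dependent randomized), $\Pi_{\mathrm{MD}}$ (Markov deterministic), $\Pi_{\mathrm{SD}}$ (stationary deterministic). Transience (standing assumption): for every $\pi\in\Pi_{\mathrm{SD}}$, $\sum_{t\ge0}\mathbb P^{\pi,s}[\tilde s_t=s']<\infty$ for all $s,s'\in\mathcal S$. $\mathrm{ERM}_\beta[\tilde x]=-\beta^{-1}\log\mathbb E[e^{-\beta\tilde x}]$. Define $v^t_s(\pi)=\mathrm{ERM}^{\pi,s}_\beta[\sum_{k=0}^{t-1}r(\tilde s_k,\tilde a_k,\tilde s_{k+1})]$,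 $v^{t,\star}_s=\max_{\pi\in\Pi_{\mathrm{MD}}}v^t_s(\pi)$, $\bm v^\infty(\pi)=\liminf_t\bm v^t(\pi)$, $\bm v^{\infty,\star}=\liminf_t\bm v^{t,\star}$. Define $g_t(\pi,\beta)=\mathrm{ERM}^{\pi,\mu}_\beta[\sum_{k=0}^{t}r(\tilde s_k,\tilde a_k,\tilde s_{k+1})]$ (initial state drawn from $\mu$), $g^\star_t(\beta)=\sup_{\pi\in\Pi_{\mathrm{HR}}}g_t(\pi,\beta)$, $g^\star_\infty(\beta)=\liminf_{t\to\infty}g^\star_t(\beta)$. For a vector $\bm v$, $\mathrm{ERM}^{\mu}_\beta[v_{\tilde s_0}]=-\beta^{-1}\log\sum_s\mu_s e^{-\beta v_s}$. *)

theory Defs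
  imports "HOL-Library.Extended_Real" "HOL-Library.Liminf_Limsup"
begin

(* States are 1..S+1; the sink state is e = S+1.  Actions form a finite type 'a.
   p s a s' : transition probability, r s a s' : reward, mu : initial distribution. *)

definition erm :: "real \<Rightarrow> 'w set \<Rightarrow> ('w \<Rightarrow> real) \<Rightarrow> ('w \<Rightarrow> real) \<Rightarrow> real" where
  "erm \<beta> \<Omega> P X = - (1 / \<beta>) * ln (\<Sum>\<omega>\<in>\<Omega>. P \<omega> * exp (- \<beta> * X \<omega>))"

(* History-dependent randomized policy: given the past state-action pairs
   (s_0,a_0),...,(s_{k-1},a_{k-1}) and current state s_k, a distribution over actions. *)
type_synonym 'a hr_policy = "(nat \<times> 'a) list \<Rightarrow> nat \<Rightarrow> 'a \<Rightarrow> real"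

definition valid_hr :: "'a::finite hr_policy \<Rightarrow> bool" where
  "valid_hr \<pi> \<longleftrightarrow> (\<forall>h s. (\<forall>a. 0 \<le> \<pi> h s a) \<and> (\<Sum>a\<in>UNIV. \<pi> h s a) = 1)"

(* Markov deterministic policy: time \<Rightarrow> state \<Rightarrow> action *)
definition hr_of_md :: "(nat \<Rightarrow> nat \<Rightarrow> 'a) \<Rightarrow> 'a hr_policy" where
  "hr_of_md \<pi> = (\<lambda>h s a. if a = \<pi> (length h) s then 1 else 0)"

(* Stationary deterministic policy: state \<Rightarrow> action *)
definition hr_of_sd :: "(nat \<Rightarrow> 'a) \<Rightarrow> 'a hr_policy" where
  "hr_of_sd \<pi> = (\<lambda>h s a. if a = \<pi> s then 1 else 0)"

definition paths :: "nat \<Rightarrow> nat \<Rightarrow> nat \<Rightarrow> nat list set" where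
  "paths S s0 n = {ss. length ss = Suc n \<and> ss ! 0 = s0 \<and> set ss \<subseteq> {1..Suc S}}"

definition paths_init :: "nat \<Rightarrow> nat \<Rightarrow> nat list set" where
  "paths_init S n = {ss. length ss = Suc n \<and> ss ! 0 \<in> {1..S} \<and> set ss \<subseteq> {1..Suc S}}"

definition acts :: "nat \<Rightarrow> 'a list set" where
  "acts n = {as. length as = n}"

(* probability of (s_1,a_0,...,a_{n-1},s_n) given s_0, under policy \<pi> *)
definition path_prob :: "(nat \<Rightarrow> 'a \<Rightarrow> nat \<Rightarrow> real) \<Rightarrow> 'a hr_policy \<Rightarrow> nat list \<Rightarrow> 'a list \<Rightarrow> real" where
  "path_prob p \<pi> ss as =
     (\<Prod>k<length as. \<pi> (zip (take k ss) (take k as)) (ss ! k) (as ! k) * p (ss ! k) (as ! k) (ss ! Suc k))"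

definition path_ret :: "(nat \<Rightarrow> 'a \<Rightarrow> nat \<Rightarrow> real) \<Rightarrow> nat list \<Rightarrow> 'a list \<Rightarrow> real" where
  "path_ret r ss as = (\<Sum>k<length as. r (ss ! k) (as ! k) (ss ! Suc k))"

definition v_fin :: "nat \<Rightarrow> (nat \<Rightarrow> 'a::finite \<Rightarrow> nat \<Rightarrow> real) \<Rightarrow> (nat \<Rightarrow> 'a \<Rightarrow> nat \<Rightarrow> real) \<Rightarrow> real
                      \<Rightarrow> 'a hr_policy \<Rightarrow> nat \<Rightarrow> nat \<Rightarrow> real" where
  "v_fin S p r \<beta> \<pi> t s = erm \<beta> (paths S s t \<times> acts t)
      (\<lambda>(ss, as). path_prob p \<pi> ss as) (\<lambda>(ss, as). path_ret r ss as)"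

(* g_t(\<pi>,\<beta>) = ERM^{\<pi>,\<mu>}_\<beta>[ sum_{k=0}^{t} r(s_k,a_k,s_{k+1}) ] *)
definition g_fin :: "nat \<Rightarrow> (nat \<Rightarrow> 'a::finite \<Rightarrow> nat \<Rightarrow> real) \<Rightarrow> (nat \<Rightarrow> 'a \<Rightarrow> nat \<Rightarrow> real) \<Rightarrow> (nat \<Rightarrow> real)
                      \<Rightarrow> real \<Rightarrow> 'a hr_policy \<Rightarrow> nat \<Rightarrow> real" where
  "g_fin S p r \<mu> \<beta> \<pi> t = erm \<beta> (paths_init S (Suc t) \<times> acts (Suc t))
      (\<lambda>(ss, as). \<mu> (ss ! 0) * path_prob p \<pi> ss as) (\<lambda>(ss, as). path_ret r ss as)"

definition v_star :: "nat \<Rightarrow> (nat \<Rightarrow> 'a::finite \<Rightarrow> nat \<Rightarrow> real) \<Rightarrow> (nat \<Rightarrow> 'a \<Rightarrow> nat \<Rightarrow> real) \<Rightarrow> real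
                      \<Rightarrow> nat \<Rightarrow> nat \<Rightarrow> ereal" where
  "v_star S p r \<beta> t s = (SUP \<pi>::nat \<Rightarrow> nat \<Rightarrow> 'a. ereal (v_fin S p r \<beta> (hr_of_md \<pi>) t s))"

definition v_inf :: "nat \<Rightarrow> (nat \<Rightarrow> 'a::finite \<Rightarrow> nat \<Rightarrow> real) \<Rightarrow> (nat \<Rightarrow> 'a \<Rightarrow> nat \<Rightarrow> real) \<Rightarrow> real
                      \<Rightarrow> 'a hr_policy \<Rightarrow> nat \<Rightarrow> ereal" where
  "v_inf S p r \<beta> \<pi> s = liminf (\<lambda>t. ereal (v_fin S p r \<beta> \<pi> t s))"

definition v_inf_star :: "nat \<Rightarrow> (nat \<Rightarrow> 'a::finite \<Rightarrow> nat \<Rightarrow> real) \<Rightarrow> (nat \<Rightarrow> 'a \<Rightarrow> nat \<Rightarrow> real) \<Rightarrow> real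
                      \<Rightarrow> nat \<Rightarrow> ereal" where
  "v_inf_star S p r \<beta> s = liminf (\<lambda>t. v_star S p r \<beta> t s)"

definition g_star :: "nat \<Rightarrow> (nat \<Rightarrow> 'a::finite \<Rightarrow> nat \<Rightarrow> real) \<Rightarrow> (nat \<Rightarrow> 'a \<Rightarrow> nat \<Rightarrow> real) \<Rightarrow> (nat \<Rightarrow> real)
                      \<Rightarrow> real \<Rightarrow> nat \<Rightarrow> ereal" where
  "g_star S p r \<mu> \<beta> t = (SUP \<pi>\<in>{\<pi>::'a hr_policy. valid_hr \<pi>}. ereal (g_fin S p r \<mu> \<beta> \<pi> t))"

definition g_inf_star :: "nat \<Rightarrow> (nat \<Rightarrow> 'a::finite \<Rightarrow> nat \<Rightarrow> real) \<Rightarrow> (nat \<Rightarrow> 'a \<Rightarrow> nat \<Rightarrow> real) \<Rightarrow> (nat \<Rightarrow> real)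
                      \<Rightarrow> real \<Rightarrow> ereal" where
  "g_inf_star S p r \<mu> \<beta> = liminf (\<lambda>t. g_star S p r \<mu> \<beta> t)"

(* ERM^\<mu>_\<beta>[v_{s_0}] = -1/\<beta> log sum_s \<mu>_s exp(-\<beta> v_s), extended to ereal-valued v
   (e^{-\<beta>(-\<infinity>)} = \<infinity>, e^{-\<beta>\<infinity>} = 0, log 0 = -\<infinity>). *)
definition erm_mu :: "nat \<Rightarrow> (nat \<Rightarrow> real) \<Rightarrow> real \<Rightarrow> (nat \<Rightarrow> ereal) \<Rightarrow> ereal" where
  "erm_mu S \<mu> \<beta> v =
     (if \<exists>s\<in>{1..S}. 0 < \<mu> s \<and> v s = -\<infinity> then -\<infinity>
      else (let Z = (\<Sum>s\<in>{s\<in>{1..S}. v s \<noteq> \<infinity>}. \<mu> s * exp (- \<beta> * real_of_ereal (v s)))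
            in if Z = 0 then \<infinity> else ereal (- (1 / \<beta>) * ln Z)))"

definition occ :: "nat \<Rightarrow> (nat \<Rightarrow> 'a::finite \<Rightarrow> nat \<Rightarrow> real) \<Rightarrow> 'a hr_policy \<Rightarrow> nat \<Rightarrow> nat \<Rightarrow> nat \<Rightarrow> real" where
  "occ S p \<pi> s s' t = (\<Sum>(ss, as)\<in>paths S s t \<times> acts t. if ss ! t = s' then path_prob p \<pi> ss as else 0)"

(* transience: every stationary deterministic policy visits non-sink states finitely often in expectation *)
definition transient :: "nat \<Rightarrow> (nat \<Rightarrow> 'a::finite \<Rightarrow> nat \<Rightarrow> real) \<Rightarrow> bool" where
  "transient S p \<longleftrightarrow> (\<forall>\<pi>::nat \<Rightarrow> 'a. \<forall>s\<in>{1..S}. \<forall>s'\<in>{1..S}.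
       summable (\<lambda>t. occ S p (hr_of_sd \<pi>) s s' t))"

definition mdp :: "nat \<Rightarrow> (nat \<Rightarrow> 'a::finite \<Rightarrow> nat \<Rightarrow> real) \<Rightarrow> (nat \<Rightarrow> 'a \<Rightarrow> nat \<Rightarrow> real) \<Rightarrow> (nat \<Rightarrow> real) \<Rightarrow> bool" where
  "mdp S p r \<mu> \<longleftrightarrow>
     (\<forall>s\<in>{1..Suc S}. \<forall>a. (\<forall>s'\<in>{1..Suc S}. 0 \<le> p s a s') \<and> (\<Sum>s'\<in>{1..Suc S}. p s a s') = 1)
   \<and> (\<forall>a. p (Suc S) a (Suc S) = 1 \<and> r (Suc S) a (Suc S) = 0)
   \<and> (\<forall>s\<in>{1..S}. 0 < \<mu> s) \<and> (\<Sum>s\<in>{1..S}. \<mu> s) = 1"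

end

theory Submission
  imports Defs
begin

lemma finite_paths: "finite (paths S s n)"
proof -
  have "paths S s n \<subseteq> {xs. set xs \<subseteq> {1..Suc S} \<and> length xs = Suc n}"
    by (auto simp: paths_def)
  then show ?thesis by (rule finite_subset) (simp add: finite_lists_length_eq)
qed

lemma finite_acts: "finite (acts n :: 'a::finite list set)"
proof -
  have "acts n = {xs::'a list. set xs \<subseteq> UNIV \<and> length xs = n}" by (auto simp: acts_def)
  then show ?thesis using finite_lists_length_eq[of "UNIV::'a set" n] by simp
qed

lemma path_prob_Cons:
  "path_prob p \<pi> (s#ss) (a#as) = \<pi> [] s a * p s a (ss!0) * path_prob p (\<lambda>h. \<pi> ((s,a)#h)) ss as"
  unfolding path_prob_def by (simp add: prod.lessThan_Suc_shift del: prod.lessThan_Suc)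

lemma path_ret_Cons:
  "path_ret r (s#ss) (a#as) = r s a (ss!0) + path_ret r ss as"
  unfolding path_ret_def by (simp add: sum.lessThan_Suc_shift del: sum.lessThan_Suc)

lemma paths_Suc_image:
  assumes "s \<in> {1..Suc S}"
  shows "paths S s (Suc t) \<times> (acts (Suc t) :: 'a list set) =
    (\<lambda>(a,s',ss,as). (s#ss, a#as)) ` (UNIV \<times> (SIGMA s':{1..Suc S}. paths S s' t \<times> acts t))"
proof (intro set_eqI iffI)
  fix x assume x: "x \<in> paths S s (Suc t) \<times> (acts (Suc t) :: 'a list set)"
  obtain ss as where xe: "x = (ss, as)" by fastforce
  from x xe have l1: "length ss = Suc (Suc t)" and h0: "ss!0 = s" and st: "set ss \<subseteq> {1..Suc S}"
    and l2: "length as = Suc t" by (auto simp: paths_def acts_def)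
  obtain s0 ss' where ssd: "ss = s0 # ss'" using l1 by (cases ss) auto
  obtain a as' where asd: "as = a # as'" using l2 by (cases as) auto
  have "s0 = s" using h0 ssd by simp
  moreover have "ss' ! 0 \<in> {1..Suc S}"
  proof -
    have "ss' ! 0 \<in> set ss" using ssd l1 by simp
    then show ?thesis using st by blast
  qed
  moreover have "ss' \<in> paths S (ss'!0) t" using st ssd l1 by (auto simp: paths_def)
  moreover have "as' \<in> acts t" using l2 asd by (auto simp: acts_def)
  ultimately show "x \<in> (\<lambda>(a,s',ss,as). (s#ss, a#as)) ` (UNIV \<times> (SIGMA s':{1..Suc S}. paths S s' t \<times> acts t))"
    using xe ssd asd by (auto intro!: image_eqI[where x="(a, ss'!0, ss', as')"])
next
  fix x assume "x \<in> (\<lambda>(a,s',ss,as). (s#ss, a#as)) ` (UNIV \<times> (SIGMA s':{1..Suc S}. paths S s' t \<times> (acts t :: 'a list set)))"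
  then show "x \<in> paths S s (Suc t) \<times> acts (Suc t)"
    using assms by (auto simp: paths_def acts_def)
qed

lemma paths_Suc_sum:
  assumes "s \<in> {1..Suc S}"
  shows "(\<Sum>x\<in>paths S s (Suc t) \<times> (acts (Suc t) :: 'a::finite list set). f x) =
    (\<Sum>a\<in>UNIV. \<Sum>s'\<in>{1..Suc S}. \<Sum>(ss,as)\<in>paths S s' t \<times> acts t. f (s#ss, a#as))"
proof -
  let ?h = "\<lambda>(a::'a,s'::nat,ss::nat list,as::'a list). (s#ss, a#as)"
  let ?D = "UNIV \<times> (SIGMA s':{1..Suc S}. paths S s' t \<times> (acts t :: 'a list set))"
  have inj: "inj_on ?h ?D"
    by (auto simp: inj_on_def paths_def)
  have "(\<Sum>x\<in>paths S s (Suc t) \<times> (acts (Suc t) :: 'a list set). f x) = (\<Sum>x\<in>?h ` ?D. f x)"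
    by (rule arg_cong[where f="sum f"], rule paths_Suc_image[OF assms])
  also have "\<dots> = (\<Sum>y\<in>?D. f (?h y))" using inj by (rule sum.reindex_cong) auto
  also have "\<dots> = (\<Sum>a\<in>UNIV. \<Sum>y\<in>(SIGMA s':{1..Suc S}. paths S s' t \<times> (acts t :: 'a list set)). f (?h (a, y)))"
    by (simp add: sum.cartesian_product case_prod_unfold)
  also have "\<dots> = (\<Sum>a\<in>UNIV. \<Sum>s'\<in>{1..Suc S}. \<Sum>(ss,as)\<in>paths S s' t \<times> acts t. f (s#ss, a#as))"
  proof (rule sum.cong[OF refl])
    fix a :: 'a
    show "(\<Sum>y\<in>(SIGMA s':{1..Suc S}. paths S s' t \<times> (acts t :: 'a list set)). f (?h (a, y))) =
      (\<Sum>s'\<in>{1..Suc S}. \<Sum>(ss,as)\<in>paths S s' t \<times> acts t. f (s#ss, a#as))"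
      apply (subst sum.Sigma)
        apply (simp_all add: finite_paths finite_acts)
      apply (rule sum.cong[OF refl])
      apply (auto simp: split_beta)
      done
  qed
  finally show ?thesis .
qed


definition shift :: "'a hr_policy \<Rightarrow> nat \<Rightarrow> 'a \<Rightarrow> 'a hr_policy" where
  "shift \<pi> s a = (\<lambda>h. \<pi> ((s,a)#h))"

lemma shift_sd[simp]: "shift (hr_of_sd \<pi>) s a = hr_of_sd \<pi>"
  by (auto simp: shift_def hr_of_sd_def)

lemma shift_md[simp]: "shift (hr_of_md \<pi>) s a = hr_of_md (\<lambda>k. \<pi> (Suc k))"
  by (auto simp: shift_def hr_of_md_def)

lemma valid_shift: "valid_hr \<pi> \<Longrightarrow> valid_hr (shift \<pi> s a)"
  by (auto simp: valid_hr_def shift_def)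

lemma valid_md: "valid_hr (hr_of_md \<pi>)"
  by (auto simp: valid_hr_def hr_of_md_def)

lemma sd_md: "hr_of_sd \<pi> = hr_of_md (\<lambda>_. \<pi>)"
  by (auto simp: hr_of_sd_def hr_of_md_def)

lemma sum_ind: "(\<Sum>a\<in>(UNIV::'a::finite set). (if a = x then 1 else 0) * g a) = (g x :: real)"
proof -
  have "(\<Sum>a\<in>(UNIV::'a set). (if a = x then 1 else 0) * g a) = (\<Sum>a\<in>(UNIV::'a set). if a = x then g a else 0)"
    by (rule sum.cong) auto
  then show ?thesis by simp
qed

definition Wv :: "nat \<Rightarrow> (nat \<Rightarrow> 'a::finite \<Rightarrow> nat \<Rightarrow> real) \<Rightarrow> (nat \<Rightarrow> 'a \<Rightarrow> nat \<Rightarrow> real) \<Rightarrow> real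
   \<Rightarrow> 'a hr_policy \<Rightarrow> nat \<Rightarrow> nat \<Rightarrow> real" where
  "Wv S p r \<beta> \<pi> t s = (\<Sum>(ss,as)\<in>paths S s t \<times> acts t. path_prob p \<pi> ss as * exp (- \<beta> * path_ret r ss as))"

lemma v_fin_W: "v_fin S p r \<beta> \<pi> t s = - (1/\<beta>) * ln (Wv S p r \<beta> \<pi> t s)"
  by (simp add: v_fin_def erm_def Wv_def case_prod_unfold)

lemma paths_0: "s \<in> {1..Suc S} \<Longrightarrow> paths S s 0 = {[s]}"
  by (auto simp: paths_def length_Suc_conv)

lemma acts_0: "acts 0 = {[]}"
  by (auto simp: acts_def)

lemma Wv_0: "s \<in> {1..Suc S} \<Longrightarrow> Wv S p r \<beta> \<pi> 0 s = 1"
  by (simp add: Wv_def paths_0 acts_0 path_prob_def path_ret_def)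

lemma Wv_Suc:
  assumes "s \<in> {1..Suc S}"
  shows "Wv S p r \<beta> \<pi> (Suc t) s = (\<Sum>a\<in>UNIV. \<pi> [] s a *
     (\<Sum>s'\<in>{1..Suc S}. p s a s' * exp (- \<beta> * r s a s') * Wv S p r \<beta> (shift \<pi> s a) t s'))"
proof -
  have "Wv S p r \<beta> \<pi> (Suc t) s = (\<Sum>a\<in>UNIV. \<Sum>s'\<in>{1..Suc S}. \<Sum>(ss,as)\<in>paths S s' t \<times> acts t.
      path_prob p \<pi> (s#ss) (a#as) * exp (- \<beta> * path_ret r (s#ss) (a#as)))"
    unfolding Wv_def by (subst paths_Suc_sum[OF assms]) (simp add: case_prod_unfold)
  also have "\<dots> = (\<Sum>a\<in>UNIV. \<Sum>s'\<in>{1..Suc S}. \<pi> [] s a * (p s a s' * exp (- \<beta> * r s a s') * Wv S p r \<beta> (shift \<pi> s a) t s'))"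
  proof (intro sum.cong refl)
    fix a s' assume "s' \<in> {1..Suc S}"
    have "(\<Sum>(ss,as)\<in>paths S s' t \<times> acts t.
      path_prob p \<pi> (s#ss) (a#as) * exp (- \<beta> * path_ret r (s#ss) (a#as))) =
      (\<Sum>(ss,as)\<in>paths S s' t \<times> acts t. (\<pi> [] s a * (p s a s' * exp (- \<beta> * r s a s'))) *
        (path_prob p (shift \<pi> s a) ss as * exp (- \<beta> * path_ret r ss as)))"
    proof (rule sum.cong[OF refl], clarify)
      fix ss as assume "ss \<in> paths S s' t"
      then have "ss ! 0 = s'" by (simp add: paths_def)
      then show "path_prob p \<pi> (s#ss) (a#as) * exp (- \<beta> * path_ret r (s#ss) (a#as)) =
        (\<pi> [] s a * (p s a s' * exp (- \<beta> * r s a s'))) *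
        (path_prob p (shift \<pi> s a) ss as * exp (- \<beta> * path_ret r ss as))"
      proof -
        have e: "exp (- (\<beta> * (x + y))) = exp (- (\<beta> * x)) * exp (- (\<beta> * y))" for x y :: real
        proof -
          have "- (\<beta> * (x + y)) = - (\<beta> * x) + - (\<beta> * y)" by (simp add: algebra_simps)
          then show ?thesis by (simp only: exp_add)
        qed
        show ?thesis using \<open>ss ! 0 = s'\<close> by (simp add: path_prob_Cons path_ret_Cons shift_def e)
      qed
    qed
    also have "\<dots> = \<pi> [] s a * (p s a s' * exp (- \<beta> * r s a s') * Wv S p r \<beta> (shift \<pi> s a) t s')"
      unfolding Wv_def by (simp add: sum_distrib_left case_prod_unfold mult.assoc)
    finally show "(\<Sum>(ss,as)\<in>paths S s' t \<times> acts t.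
      path_prob p \<pi> (s#ss) (a#as) * exp (- \<beta> * path_ret r (s#ss) (a#as))) =
      \<pi> [] s a * (p s a s' * exp (- \<beta> * r s a s') * Wv S p r \<beta> (shift \<pi> s a) t s')" .
  qed
  also have "\<dots> = (\<Sum>a\<in>UNIV. \<pi> [] s a *
     (\<Sum>s'\<in>{1..Suc S}. p s a s' * exp (- \<beta> * r s a s') * Wv S p r \<beta> (shift \<pi> s a) t s'))"
    by (simp only: sum_distrib_left)
  finally show ?thesis .
qed

lemma occ_0: "s \<in> {1..Suc S} \<Longrightarrow> occ S p \<pi> s s' 0 = (if s = s' then 1 else 0)"
  by (simp add: occ_def paths_0 acts_0 path_prob_def)

lemma occ_Suc:
  assumes "s \<in> {1..Suc S}"
  shows "occ S p \<pi> s s'' (Suc t) = (\<Sum>a\<in>UNIV. \<pi> [] s a *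
     (\<Sum>s'\<in>{1..Suc S}. p s a s' * occ S p (shift \<pi> s a) s' s'' t))"
proof -
  have "occ S p \<pi> s s'' (Suc t) = (\<Sum>a\<in>UNIV. \<Sum>s'\<in>{1..Suc S}. \<Sum>(ss,as)\<in>paths S s' t \<times> acts t.
      if (s#ss) ! Suc t = s'' then path_prob p \<pi> (s#ss) (a#as) else 0)"
    unfolding occ_def by (subst paths_Suc_sum[OF assms]) (simp add: case_prod_unfold cong: if_cong)
  also have "\<dots> = (\<Sum>a\<in>UNIV. \<Sum>s'\<in>{1..Suc S}. \<pi> [] s a * (p s a s' * occ S p (shift \<pi> s a) s' s'' t))"
  proof (intro sum.cong refl)
    fix a s' assume "s' \<in> {1..Suc S}"
    have "(\<Sum>(ss,as)\<in>paths S s' t \<times> acts t.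
      if (s#ss) ! Suc t = s'' then path_prob p \<pi> (s#ss) (a#as) else 0) =
      (\<Sum>(ss,as)\<in>paths S s' t \<times> acts t. (\<pi> [] s a * p s a s') *
        (if ss ! t = s'' then path_prob p (shift \<pi> s a) ss as else 0))"
    proof (rule sum.cong[OF refl], clarify)
      fix ss as assume "ss \<in> paths S s' t"
      then have "ss ! 0 = s'" by (simp add: paths_def)
      then show "(if (s#ss) ! Suc t = s'' then path_prob p \<pi> (s#ss) (a#as) else 0) =
        (\<pi> [] s a * p s a s') *
        (if ss ! t = s'' then path_prob p (shift \<pi> s a) ss as else 0)"
        by (simp add: path_prob_Cons shift_def)
    qed
    also have "\<dots> = \<pi> [] s a * (p s a s' * occ S p (shift \<pi> s a) s' s'' t)"
      unfolding occ_def by (simp add: sum_distrib_left case_prod_unfold mult.assoc)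
    finally show "(\<Sum>(ss,as)\<in>paths S s' t \<times> acts t.
      if (s#ss) ! Suc t = s'' then path_prob p \<pi> (s#ss) (a#as) else 0) =
      \<pi> [] s a * (p s a s' * occ S p (shift \<pi> s a) s' s'' t)" .
  qed
  also have "\<dots> = (\<Sum>a\<in>UNIV. \<pi> [] s a *
     (\<Sum>s'\<in>{1..Suc S}. p s a s' * occ S p (shift \<pi> s a) s' s'' t))"
    by (simp only: sum_distrib_left)
  finally show ?thesis .
qed

declare sum.cl_ivl_Suc[simp del] prod.cl_ivl_Suc[simp del]

locale ermdp =
  fixes S :: nat and p r :: "nat \<Rightarrow> 'a::finite \<Rightarrow> nat \<Rightarrow> real" and \<mu> :: "nat \<Rightarrow> real" and \<beta> :: real
  assumes beta_pos: "0 < \<beta>" and is_mdp: "mdp S p r \<mu>" and is_trans: "transient S p"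
begin

abbreviation "R \<equiv> {1..Suc S}"
abbreviation "N \<equiv> {1..S}"
abbreviation "e \<equiv> Suc S"

lemma p_nonneg: "s \<in> R \<Longrightarrow> s' \<in> R \<Longrightarrow> 0 \<le> p s a s'"
  using is_mdp by (auto simp: mdp_def)

lemma p_sum: "s \<in> R \<Longrightarrow> (\<Sum>s'\<in>R. p s a s') = 1"
  using is_mdp by (auto simp: mdp_def)

lemma p_ee: "p e a e = 1" and r_ee: "r e a e = 0"
  using is_mdp by (auto simp: mdp_def)

lemma mu_pos: "s \<in> N \<Longrightarrow> 0 < \<mu> s" and mu_sum: "(\<Sum>s\<in>N. \<mu> s) = 1"
  using is_mdp by (auto simp: mdp_def)

lemma S_pos: "1 \<le> S"
  using mu_sum by (cases S) auto

lemma p_e_other: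
  assumes "s' \<in> R" "s' \<noteq> e" shows "p e a s' = 0"
proof -
  have eR: "e \<in> R" by simp
  have "(\<Sum>s'\<in>R. p e a s') = p e a e + (\<Sum>s'\<in>R - {e}. p e a s')"
    by (rule sum.remove) auto
  then have "(\<Sum>s'\<in>R - {e}. p e a s') = 0" using p_sum[OF eR, of a] p_ee by simp
  moreover have "\<forall>x\<in>R - {e}. 0 \<le> p e a x" using p_nonneg[OF eR] by auto
  ultimately have "\<forall>x\<in>R - {e}. p e a x = 0" by (subst sum_nonneg_eq_0_iff[symmetric]) auto
  then show ?thesis using assms by auto
qed

definition c :: "nat \<Rightarrow> 'a \<Rightarrow> nat \<Rightarrow> real" where
  "c s a s' = p s a s' * exp (- \<beta> * r s a s')"

lemma c_nonneg: "s \<in> R \<Longrightarrow> s' \<in> R \<Longrightarrow> 0 \<le> c s a s'"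
  by (simp add: c_def p_nonneg)

lemma c_pos_iff: "c s a s' > 0 \<longleftrightarrow> p s a s' > 0"
  by (simp add: c_def zero_less_mult_iff)

lemma c_ee: "c e a e = 1"
  by (simp add: c_def p_ee r_ee)

lemma c_e_other: "s' \<in> R \<Longrightarrow> s' \<noteq> e \<Longrightarrow> c e a s' = 0"
  by (simp add: c_def p_e_other)

lemma sum_c_e: "(\<Sum>s'\<in>R. c e a s' * f s') = f e"
proof -
  have "(\<Sum>s'\<in>R. c e a s' * f s') = c e a e * f e + (\<Sum>s'\<in>R - {e}. c e a s' * f s')"
    by (rule sum.remove) auto
  also have "(\<Sum>s'\<in>R - {e}. c e a s' * f s') = 0"
    by (rule sum.neutral) (auto simp: c_e_other)
  finally show ?thesis by (simp add: c_ee)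
qed

lemma sum_c_pos:
  assumes "s \<in> R" "\<And>s'. s' \<in> R \<Longrightarrow> 0 < f s'"
  shows "0 < (\<Sum>s'\<in>R. c s a s' * f s')"
proof -
  obtain s' where s': "s' \<in> R" "p s a s' > 0"
  proof (rule ccontr)
    assume "\<not> thesis"
    then have "\<forall>s'\<in>R. p s a s' \<le> 0" using that by force
    then have "(\<Sum>s'\<in>R. p s a s') \<le> 0" by (intro sum_nonpos) auto
    then show False using p_sum[OF assms(1)] by simp
  qed
  show ?thesis
  proof (rule sum_pos2[OF _ s'(1)])
    show "0 < c s a s' * f s'" using s' assms c_pos_iff by auto
    fix i assume i: "i \<in> R"
    show "0 \<le> c s a i * f i" using c_nonneg[OF assms(1) i, of a] assms(2)[OF i] by simp
  qed simp
qed

definition Top :: "(nat \<Rightarrow> real) \<Rightarrow> nat \<Rightarrow> real" where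
  "Top f s = Min (range (\<lambda>a. \<Sum>s'\<in>R. c s a s' * f s'))"

lemma Top_le: "Top f s \<le> (\<Sum>s'\<in>R. c s a s' * f s')"
  unfolding Top_def by (rule Min_le) auto

lemma Top_achieved: "\<exists>a. Top f s = (\<Sum>s'\<in>R. c s a s' * f s')"
proof -
  have "Top f s \<in> range (\<lambda>a. \<Sum>s'\<in>R. c s a s' * f s')"
    unfolding Top_def by (rule Min_in) auto
  then show ?thesis by auto
qed

lemma sum_c_mono: "s \<in> R \<Longrightarrow> (\<And>s'. s' \<in> R \<Longrightarrow> f s' \<le> g s') \<Longrightarrow>
   (\<Sum>s'\<in>R. c s a s' * f s') \<le> (\<Sum>s'\<in>R. c s a s' * g s')"
  by (intro sum_mono mult_left_mono) (auto simp: c_nonneg)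

lemma Top_mono:
  assumes "s \<in> R" "\<And>s'. s' \<in> R \<Longrightarrow> f s' \<le> g s'"
  shows "Top f s \<le> Top g s"
proof -
  obtain a where a: "Top g s = (\<Sum>s'\<in>R. c s a s' * g s')" using Top_achieved by blast
  have "Top f s \<le> (\<Sum>s'\<in>R. c s a s' * f s')" by (rule Top_le)
  also have "\<dots> \<le> (\<Sum>s'\<in>R. c s a s' * g s')" by (rule sum_c_mono[OF assms])
  finally show ?thesis using a by simp
qed

lemma Top_e: "Top f e = f e"
  unfolding Top_def sum_c_e by simp

lemma Top_pos: "s \<in> R \<Longrightarrow> (\<And>s'. s' \<in> R \<Longrightarrow> 0 < f s') \<Longrightarrow> 0 < Top f s"
  using Top_achieved[of f s] sum_c_pos by metis

definition wv :: "nat \<Rightarrow> nat \<Rightarrow> real" where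
  "wv t = (Top ^^ t) (\<lambda>_. 1)"

lemma wv_0: "wv 0 s = 1" by (simp add: wv_def)
lemma wv_Suc: "wv (Suc t) = Top (wv t)" by (simp add: wv_def)

lemma wv_pos: "s \<in> R \<Longrightarrow> 0 < wv t s"
  by (induction t arbitrary: s) (auto simp: wv_0 wv_Suc intro!: Top_pos)

abbreviation "W \<equiv> Wv S p r \<beta>"

lemma W_Suc: "s \<in> R \<Longrightarrow> W \<pi> (Suc t) s = (\<Sum>a\<in>UNIV. \<pi> [] s a * (\<Sum>s'\<in>R. c s a s' * W (shift \<pi> s a) t s'))"
  unfolding c_def by (rule Wv_Suc)

lemma W_ge: "valid_hr \<pi> \<Longrightarrow> s \<in> R \<Longrightarrow> wv t s \<le> W \<pi> t s"
proof (induction t arbitrary: \<pi> s)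
  case 0
  then show ?case by (simp add: wv_0 Wv_0)
next
  case (Suc t)
  have "wv (Suc t) s = (\<Sum>a\<in>UNIV. \<pi> [] s a * wv (Suc t) s)"
    using Suc.prems(1) by (simp add: valid_hr_def flip: sum_distrib_right)
  also have "\<dots> \<le> (\<Sum>a\<in>UNIV. \<pi> [] s a * (\<Sum>s'\<in>R. c s a s' * W (shift \<pi> s a) t s'))"
  proof (intro sum_mono mult_left_mono)
    fix a
    show "0 \<le> \<pi> [] s a" using Suc.prems(1) by (simp add: valid_hr_def)
    have "wv (Suc t) s \<le> (\<Sum>s'\<in>R. c s a s' * wv t s')" unfolding wv_Suc by (rule Top_le)
    also have "\<dots> \<le> (\<Sum>s'\<in>R. c s a s' * W (shift \<pi> s a) t s')"
      by (rule sum_c_mono[OF Suc.prems(2)]) (rule Suc.IH[OF valid_shift[OF Suc.prems(1)]])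
    finally show "wv (Suc t) s \<le> (\<Sum>s'\<in>R. c s a s' * W (shift \<pi> s a) t s')" .
  qed
  also have "\<dots> = W \<pi> (Suc t) s" using W_Suc[OF Suc.prems(2)] by simp
  finally show ?case .
qed

lemma W_md_Suc: assumes "s \<in> R" shows "W (hr_of_md \<pi>) (Suc t) s = (\<Sum>s'\<in>R. c s (\<pi> 0 s) s' * W (hr_of_md (\<lambda>k. \<pi> (Suc k))) t s')"
proof -
  have "hr_of_md \<pi> [] s a = (if a = \<pi> 0 s then 1 else 0)" for a by (simp add: hr_of_md_def)
  then show ?thesis using assms by (simp add: W_Suc sum_ind)
qed

lemma W_sd_Suc: assumes "s \<in> R" shows "W (hr_of_sd \<pi>) (Suc t) s = (\<Sum>s'\<in>R. c s (\<pi> s) s' * W (hr_of_sd \<pi>) t s')"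
proof -
  have "hr_of_sd \<pi> [] s a = (if a = \<pi> s then 1 else 0)" for a by (simp add: hr_of_sd_def)
  then show ?thesis using assms by (simp add: W_Suc sum_ind)
qed

lemma W_md_opt: "\<exists>\<pi>. \<forall>s\<in>R. W (hr_of_md \<pi>) t s = wv t s"
proof (induction t)
  case 0
  then show ?case by (simp add: Wv_0 wv_0)
next
  case (Suc t)
  then obtain \<pi> where \<pi>: "\<forall>s\<in>R. W (hr_of_md \<pi>) t s = wv t s" by blast
  define a0 where "a0 s = (SOME a. Top (wv t) s = (\<Sum>s'\<in>R. c s a s' * wv t s'))" for s
  have a0: "Top (wv t) s = (\<Sum>s'\<in>R. c s (a0 s) s' * wv t s')" for s
    unfolding a0_def by (rule someI_ex) (rule Top_achieved)
  define \<pi>' where "\<pi>' = case_nat a0 \<pi>"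
  have "W (hr_of_md \<pi>') (Suc t) s = wv (Suc t) s" if s: "s \<in> R" for s
  proof -
    have "W (hr_of_md \<pi>') (Suc t) s = (\<Sum>s'\<in>R. c s (a0 s) s' * W (hr_of_md \<pi>) t s')"
      using W_md_Suc[OF s, of \<pi>'] by (simp add: \<pi>'_def)
    also have "\<dots> = (\<Sum>s'\<in>R. c s (a0 s) s' * wv t s')" using \<pi> by simp
    also have "\<dots> = wv (Suc t) s" using a0 by (simp add: wv_Suc)
    finally show ?thesis .
  qed
  then show ?case by blast
qed

lemma v_star_eq: "s \<in> R \<Longrightarrow> v_star S p r \<beta> t s = ereal (- (1/\<beta>) * ln (wv t s))"
proof -
  assume s: "s \<in> R"
  obtain \<pi>0 where \<pi>0: "\<forall>s\<in>R. W (hr_of_md \<pi>0) t s = wv t s" using W_md_opt by blast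
  show ?thesis
    unfolding v_star_def
  proof (rule antisym)
    show "(SUP \<pi>. ereal (v_fin S p r \<beta> (hr_of_md \<pi>) t s)) \<le> ereal (- (1 / \<beta>) * ln (wv t s))"
    proof (rule SUP_least)
      fix \<pi> :: "nat \<Rightarrow> nat \<Rightarrow> 'a"
      have "wv t s \<le> W (hr_of_md \<pi>) t s" by (rule W_ge[OF valid_md s])
      then have "ln (wv t s) \<le> ln (W (hr_of_md \<pi>) t s)" using wv_pos[OF s, of t]
        by (metis ln_le_cancel_iff less_le_trans)
      then show "ereal (v_fin S p r \<beta> (hr_of_md \<pi>) t s) \<le> ereal (- (1 / \<beta>) * ln (wv t s))"
        using beta_pos by (simp add: v_fin_W divide_right_mono)
    qed
    show "ereal (- (1 / \<beta>) * ln (wv t s)) \<le> (SUP \<pi>. ereal (v_fin S p r \<beta> (hr_of_md \<pi>) t s))"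
      using \<pi>0 s by (intro SUP_upper2[of \<pi>0]) (auto simp: v_fin_W)
  qed
qed

lemma paths_init_sum:
  "(\<Sum>x\<in>paths_init S n \<times> (acts n :: 'a list set). \<mu> (fst x ! 0) * F x) =
   (\<Sum>s0\<in>N. \<mu> s0 * (\<Sum>x\<in>paths S s0 n \<times> acts n. F x))"
proof -
  let ?h = "\<lambda>(s0::nat, x::nat list \<times> 'a list). x"
  let ?D = "SIGMA s0:N. paths S s0 n \<times> (acts n :: 'a list set)"
  have img: "paths_init S n \<times> (acts n :: 'a list set) = ?h ` ?D"
  proof (intro set_eqI iffI)
    fix x assume x: "x \<in> paths_init S n \<times> (acts n :: 'a list set)"
    then have "(fst x ! 0, x) \<in> ?D" by (auto simp: paths_init_def paths_def)
    then show "x \<in> ?h ` ?D" by force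
  next
    fix x assume "x \<in> ?h ` ?D"
    then show "x \<in> paths_init S n \<times> (acts n :: 'a list set)" by (auto simp: paths_init_def paths_def)
  qed
  have inj: "inj_on ?h ?D" by (auto simp: inj_on_def paths_def)
  have "(\<Sum>x\<in>paths_init S n \<times> (acts n :: 'a list set). \<mu> (fst x ! 0) * F x) =
     (\<Sum>y\<in>?D. \<mu> (fst (?h y) ! 0) * F (?h y))"
    unfolding img by (rule sum.reindex[OF inj, unfolded comp_def])
  also have "\<dots> = (\<Sum>y\<in>?D. \<mu> (fst y) * F (snd y))"
    by (rule sum.cong) (auto simp: paths_def)
  also have "\<dots> = (\<Sum>s0\<in>N. \<Sum>x\<in>paths S s0 n \<times> acts n. \<mu> s0 * F x)"
    by (subst sum.Sigma) (auto simp: finite_paths finite_acts split_beta)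
  also have "\<dots> = (\<Sum>s0\<in>N. \<mu> s0 * (\<Sum>x\<in>paths S s0 n \<times> acts n. F x))"
    by (simp add: sum_distrib_left)
  finally show ?thesis .
qed

lemma g_fin_W: "g_fin S p r \<mu> \<beta> \<pi> t = - (1/\<beta>) * ln (\<Sum>s\<in>N. \<mu> s * W \<pi> (Suc t) s)"
proof -
  have "g_fin S p r \<mu> \<beta> \<pi> t = - (1/\<beta>) * ln (\<Sum>x\<in>paths_init S (Suc t) \<times> acts (Suc t).
      \<mu> (fst x ! 0) * (path_prob p \<pi> (fst x) (snd x) * exp (- \<beta> * path_ret r (fst x) (snd x))))"
    by (simp add: g_fin_def erm_def case_prod_unfold mult.assoc)
  also have "\<dots> = - (1/\<beta>) * ln (\<Sum>s\<in>N. \<mu> s * W \<pi> (Suc t) s)"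
    by (subst paths_init_sum) (simp add: Wv_def case_prod_unfold)
  finally show ?thesis .
qed

lemma sum_mu_w_pos: "0 < (\<Sum>s\<in>N. \<mu> s * wv t s)"
proof (rule sum_pos2[of _ 1])
  show "1 \<in> N" using S_pos by simp
  show "0 < \<mu> 1 * wv t 1" using S_pos by (intro mult_pos_pos mu_pos wv_pos) auto
  fix i assume "i \<in> N" then show "0 \<le> \<mu> i * wv t i"
    by (intro mult_nonneg_nonneg less_imp_le mu_pos wv_pos) auto
qed simp

lemma g_star_eq: "g_star S p r \<mu> \<beta> t = ereal (- (1/\<beta>) * ln (\<Sum>s\<in>N. \<mu> s * wv (Suc t) s))"
proof -
  obtain \<pi>0 where \<pi>0: "\<forall>s\<in>R. W (hr_of_md \<pi>0) (Suc t) s = wv (Suc t) s" using W_md_opt by blast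
  show ?thesis
    unfolding g_star_def
  proof (rule antisym)
    show "(SUP \<pi>\<in>{\<pi>. valid_hr \<pi>}. ereal (g_fin S p r \<mu> \<beta> \<pi> t)) \<le> ereal (- (1/\<beta>) * ln (\<Sum>s\<in>N. \<mu> s * wv (Suc t) s))"
    proof (rule SUP_least)
      fix \<pi> :: "'a hr_policy" assume "\<pi> \<in> {\<pi>. valid_hr \<pi>}"
      then have v: "valid_hr \<pi>" by simp
      have "(\<Sum>s\<in>N. \<mu> s * wv (Suc t) s) \<le> (\<Sum>s\<in>N. \<mu> s * W \<pi> (Suc t) s)"
        by (intro sum_mono mult_left_mono W_ge[OF v] less_imp_le mu_pos) auto
      then have "ln (\<Sum>s\<in>N. \<mu> s * wv (Suc t) s) \<le> ln (\<Sum>s\<in>N. \<mu> s * W \<pi> (Suc t) s)"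
        using sum_mu_w_pos[of "Suc t"] by (metis ln_le_cancel_iff less_le_trans)
      then show "ereal (g_fin S p r \<mu> \<beta> \<pi> t) \<le> ereal (- (1/\<beta>) * ln (\<Sum>s\<in>N. \<mu> s * wv (Suc t) s))"
        using beta_pos by (simp add: g_fin_W divide_right_mono)
    qed
    have "g_fin S p r \<mu> \<beta> (hr_of_md \<pi>0) t = - (1/\<beta>) * ln (\<Sum>s\<in>N. \<mu> s * wv (Suc t) s)"
      unfolding g_fin_W using \<pi>0 by (intro arg_cong[where f="\<lambda>x. - (1/\<beta>) * ln x"] sum.cong) auto
    then show "ereal (- (1/\<beta>) * ln (\<Sum>s\<in>N. \<mu> s * wv (Suc t) s)) \<le> (SUP \<pi>\<in>{\<pi>. valid_hr \<pi>}. ereal (g_fin S p r \<mu> \<beta> \<pi> t))"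
      by (intro SUP_upper2[of "hr_of_md \<pi>0"]) (auto simp: valid_md)
  qed
qed

end

context ermdp
begin

definition Tpol :: "(nat \<Rightarrow> 'a) \<Rightarrow> (nat \<Rightarrow> real) \<Rightarrow> nat \<Rightarrow> real" where
  "Tpol \<pi> f s = (\<Sum>s'\<in>R. c s (\<pi> s) s' * f s')"

lemma Tpol_lin: "Tpol \<pi> (\<lambda>s. a * f s + b * g s) s = a * Tpol \<pi> f s + b * Tpol \<pi> g s"
  unfolding Tpol_def by (simp add: sum.distrib sum_distrib_left algebra_simps)

lemma Tpol_e: "Tpol \<pi> f e = f e"
  unfolding Tpol_def by (rule sum_c_e)

lemma Tpow_e: "(Tpol \<pi> ^^ t) f e = f e"
  by (induction t) (auto simp: Tpol_e)

lemma Tpow_lin: "(Tpol \<pi> ^^ t) (\<lambda>s. a * f s + b * g s) = (\<lambda>s. a * (Tpol \<pi> ^^ t) f s + b * (Tpol \<pi> ^^ t) g s)"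
proof (induction t)
  case 0 then show ?case by simp
next
  case (Suc t) then show ?case by (simp add: Tpol_lin)
qed

lemma Tpow_nonneg: "(\<And>s. s \<in> R \<Longrightarrow> 0 \<le> f s) \<Longrightarrow> s \<in> R \<Longrightarrow> 0 \<le> (Tpol \<pi> ^^ t) f s"
proof (induction t arbitrary: s)
  case 0 then show ?case by simp
next
  case (Suc t)
  then show ?case unfolding funpow.simps comp_def Tpol_def
    by (intro sum_nonneg mult_nonneg_nonneg c_nonneg) auto
qed

definition closed :: "nat set \<Rightarrow> (nat \<Rightarrow> 'a) \<Rightarrow> bool" where
  "closed X \<pi> \<longleftrightarrow> X \<subseteq> R \<and> (\<forall>s\<in>X. \<forall>s'\<in>R. 0 < c s (\<pi> s) s' \<longrightarrow> s' \<in> X)"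

lemma closed_R: "closed R \<pi>"
  by (simp add: closed_def)

lemma Tpol_mono_on:
  assumes X: "closed X \<pi>" and fg: "\<And>s. s \<in> X \<Longrightarrow> f s \<le> g s" and s: "s \<in> X"
  shows "Tpol \<pi> f s \<le> Tpol \<pi> g s"
  unfolding Tpol_def
proof (rule sum_mono)
  fix s' assume s': "s' \<in> R"
  have sR: "s \<in> R" using X s by (auto simp: closed_def)
  have c0: "0 \<le> c s (\<pi> s) s'" using c_nonneg[OF sR s'] .
  show "c s (\<pi> s) s' * f s' \<le> c s (\<pi> s) s' * g s'"
  proof (cases "0 < c s (\<pi> s) s'")
    case True
    then have "s' \<in> X" using X s s' by (auto simp: closed_def)
    then show ?thesis using fg c0 by (simp add: mult_left_mono)
  next
    case False
    then have "c s (\<pi> s) s' = 0" using c0 by simp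
    then show ?thesis by simp
  qed
qed

lemma Tpow_mono_on:
  assumes X: "closed X \<pi>" and fg: "\<And>s. s \<in> X \<Longrightarrow> f s \<le> g s" and s: "s \<in> X"
  shows "(Tpol \<pi> ^^ t) f s \<le> (Tpol \<pi> ^^ t) g s"
  using s
proof (induction t arbitrary: s)
  case 0 then show ?case using fg by simp
next
  case (Suc t)
  then show ?case by (simp add: Tpol_mono_on[OF X])
qed

lemma W_sd_pow: "s \<in> R \<Longrightarrow> W (hr_of_sd \<pi>) t s = (Tpol \<pi> ^^ t) (\<lambda>_. 1) s"
proof (induction t arbitrary: s)
  case 0 then show ?case by (simp add: Wv_0)
next
  case (Suc t)
  then show ?case by (simp add: W_sd_Suc Tpol_def)
qed

definition u0 :: "nat \<Rightarrow> real" where "u0 s = (if s = e then 1 else 0)"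

definition uv :: "nat \<Rightarrow> nat \<Rightarrow> real" where "uv t = (Top ^^ t) u0"

lemma uv_Suc: "uv (Suc t) = Top (uv t)" by (simp add: uv_def)
lemma uv_0: "uv 0 = u0" by (simp add: uv_def)

lemma Top_nonneg: assumes "s \<in> R" "\<And>s'. s' \<in> R \<Longrightarrow> 0 \<le> f s'" shows "0 \<le> Top f s"
proof -
  obtain a where a: "Top f s = (\<Sum>s'\<in>R. c s a s' * f s')" using Top_achieved by blast
  have "0 \<le> (\<Sum>s'\<in>R. c s a s' * f s')"
    by (intro sum_nonneg mult_nonneg_nonneg c_nonneg[OF assms(1)] assms(2))
  then show ?thesis using a by simp
qed

lemma uv_nonneg: "s \<in> R \<Longrightarrow> 0 \<le> uv t s"
proof (induction t arbitrary: s)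
  case 0 then show ?case by (simp add: uv_0 u0_def)
next
  case (Suc t) then show ?case unfolding uv_Suc by (intro Top_nonneg)
qed

lemma uv_mono: "s \<in> R \<Longrightarrow> uv t s \<le> uv (Suc t) s"
proof (induction t arbitrary: s)
  case 0
  show ?case
  proof (cases "s = e")
    case True then show ?thesis by (simp add: uv_0 uv_Suc Top_e)
  next
    case False then show ?thesis using 0 uv_nonneg[of s 1] by (simp add: uv_0 u0_def)
  qed
next
  case (Suc t)
  show ?case unfolding uv_Suc by (rule Top_mono) (use Suc in \<open>auto simp: uv_Suc\<close>)
qed

lemma uv_incseq: "s \<in> R \<Longrightarrow> incseq (\<lambda>t. uv t s)"
  by (rule incseq_SucI) (rule uv_mono)

lemma uv_le_wv: "s \<in> R \<Longrightarrow> uv t s \<le> wv t s"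
proof (induction t arbitrary: s)
  case 0 then show ?case by (simp add: uv_0 wv_0 u0_def)
next
  case (Suc t)
  show ?case unfolding uv_Suc wv_Suc by (rule Top_mono) (use Suc in auto)
qed

lemma uv_e: "uv t e = 1"
  by (induction t) (auto simp: uv_0 uv_Suc u0_def Top_e)

definition Fset :: "nat set" where "Fset = {s\<in>N. bdd_above (range (\<lambda>t. uv t s))}"

definition Lv :: "nat \<Rightarrow> real" where "Lv s = (SUP t. uv t s)"

lemma Fset_sub: "Fset \<subseteq> N" by (auto simp: Fset_def)

lemma uv_lim: "s \<in> Fset \<Longrightarrow> (\<lambda>t. uv t s) \<longlonglongrightarrow> Lv s"
  unfolding Lv_def by (rule LIMSEQ_incseq_SUP) (auto simp: Fset_def intro: uv_incseq)

lemma uv_le_Lv: "s \<in> Fset \<Longrightarrow> uv t s \<le> Lv s"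
  unfolding Lv_def by (rule cSUP_upper) (auto simp: Fset_def)

lemma uv_top: assumes "s \<in> N" "s \<notin> Fset" shows "filterlim (\<lambda>t. uv t s) at_top sequentially"
proof -
  have nb: "\<not> bdd_above (range (\<lambda>t. uv t s))" using assms by (auto simp: Fset_def)
  have inc: "incseq (\<lambda>t. uv t s)" using assms by (intro uv_incseq) auto
  show ?thesis unfolding filterlim_at_top
  proof
    fix Z
    obtain t0 where "Z < uv t0 s"
    proof (rule ccontr)
      assume "\<not> thesis"
      have "uv t s \<le> Z" for t
      proof (rule ccontr)
        assume "\<not> uv t s \<le> Z"
        then have "Z < uv t s" by simp
        then show False using that \<open>\<not> thesis\<close> by blast
      qed
      then have "\<forall>t. uv t s \<le> Z" by blast
      then have "bdd_above (range (\<lambda>t. uv t s))" by (intro bdd_aboveI2) auto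
      then show False using nb by simp
    qed
    show "eventually (\<lambda>t. Z \<le> uv t s) sequentially"
      unfolding eventually_sequentially
    proof (rule exI[of _ t0], intro allI impI)
      fix t assume "t0 \<le> t"
      then have "uv t0 s \<le> uv t s" using inc by (simp add: incseq_def)
      then show "Z \<le> uv t s" using \<open>Z < uv t0 s\<close> by simp
    qed
  qed
qed

lemma uv_mono_le: "s \<in> R \<Longrightarrow> t \<le> t' \<Longrightarrow> uv t s \<le> uv t' s"
  using uv_incseq by (simp add: incseq_def)

definition Aopt :: "nat \<Rightarrow> nat \<Rightarrow> 'a" where
  "Aopt t s = (SOME a. Top (uv t) s = (\<Sum>s'\<in>R. c s a s' * uv t s'))"

lemma Aopt: "Top (uv t) s = (\<Sum>s'\<in>R. c s (Aopt t s) s' * uv t s')"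
  unfolding Aopt_def by (rule someI_ex) (rule Top_achieved)

definition pistar :: "nat \<Rightarrow> 'a" where
  "pistar s = (SOME a. infinite {t. Aopt t s = a})"

lemma pistar_inf: "infinite {t. Aopt t s = pistar s}"
proof -
  have "\<exists>y\<in>range (\<lambda>t. Aopt t s). infinite ((\<lambda>t. Aopt t s) -` {y})"
    by (rule inf_img_fin_dom) auto
  then have "\<exists>a. infinite {t. Aopt t s = a}" by (auto simp: vimage_def)
  then show ?thesis unfolding pistar_def by (rule someI_ex)
qed

lemma RHS_le:
  assumes s: "s \<in> Fset"
  shows "(\<Sum>s'\<in>R. c s (pistar s) s' * uv t s') \<le> Lv s"
proof -
  obtain t' where t': "t \<le> t'" "Aopt t' s = pistar s"
    using pistar_inf[of s] unfolding infinite_nat_iff_unbounded_le by blast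
  have sR: "s \<in> R" using s Fset_sub by auto
  have "(\<Sum>s'\<in>R. c s (pistar s) s' * uv t s') \<le> (\<Sum>s'\<in>R. c s (pistar s) s' * uv t' s')"
    by (rule sum_c_mono[OF sR]) (rule uv_mono_le[OF _ t'(1)])
  also have "\<dots> = uv (Suc t') s" using Aopt[of t' s] t'(2) by (simp add: uv_Suc)
  also have "\<dots> \<le> Lv s" by (rule uv_le_Lv[OF s])
  finally show ?thesis .
qed

abbreviation "G \<equiv> insert e Fset"

lemma closedG: "closed G pistar"
  unfolding closed_def
proof (intro conjI ballI impI)
  show "G \<subseteq> R" using Fset_sub by auto
  fix s s' assume s: "s \<in> G" and s': "s' \<in> R" and cpos: "0 < c s (pistar s) s'"
  show "s' \<in> G"
  proof (cases "s = e")
    case True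
    then show ?thesis using c_e_other[OF s'] cpos by fastforce
  next
    case False
    then have sF: "s \<in> Fset" using s by simp
    have sR: "s \<in> R" using sF Fset_sub by auto
    show ?thesis
    proof (cases "s' = e")
      case True then show ?thesis by simp
    next
      case False
      have "uv t s' \<le> Lv s / c s (pistar s) s'" for t
      proof -
        have "c s (pistar s) s' * uv t s' \<le> (\<Sum>s'\<in>R. c s (pistar s) s' * uv t s')"
          by (rule member_le_sum[OF s']) (auto intro!: mult_nonneg_nonneg c_nonneg[OF sR] uv_nonneg)
        also have "\<dots> \<le> Lv s" by (rule RHS_le[OF sF])
        finally show ?thesis using cpos by (simp add: field_simps)
      qed
      then have "bdd_above (range (\<lambda>t. uv t s'))" by (intro bdd_aboveI2) 
      then have "s' \<in> Fset" using False s' by (auto simp: Fset_def)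
      then show ?thesis by simp
    qed
  qed
qed

definition Lf :: "nat \<Rightarrow> real" where
  "Lf s = (if s = e then 1 else if s \<in> Fset then Lv s else 0)"

lemma c_zero_outside: "s \<in> G \<Longrightarrow> s' \<in> R \<Longrightarrow> s' \<notin> G \<Longrightarrow> c s (pistar s) s' = 0"
proof -
  assume a: "s \<in> G" "s' \<in> R" "s' \<notin> G"
  then have "\<not> 0 < c s (pistar s) s'" using closedG unfolding closed_def by blast
  moreover have "s \<in> R" using a Fset_sub by auto
  ultimately show ?thesis using c_nonneg[OF _ a(2), of s "pistar s"] by linarith
qed

lemma Tpol_Lf: assumes s: "s \<in> G" shows "Tpol pistar Lf s \<le> Lf s"
proof (cases "s = e")
  case True
  then show ?thesis by (simp only: Tpol_e)
next
  case False
  then have sF: "s \<in> Fset" using s by simp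
  have lim: "(\<lambda>t. \<Sum>s'\<in>R. c s (pistar s) s' * uv t s') \<longlonglongrightarrow> (\<Sum>s'\<in>R. c s (pistar s) s' * Lf s')"
  proof (rule tendsto_sum)
    fix s' assume s': "s' \<in> R"
    show "(\<lambda>t. c s (pistar s) s' * uv t s') \<longlonglongrightarrow> c s (pistar s) s' * Lf s'"
    proof (cases "s' = e")
      case True then show ?thesis by (simp add: uv_e Lf_def)
    next
      case False
      show ?thesis
      proof (cases "s' \<in> Fset")
        case True
        then show ?thesis using False by (simp add: Lf_def) (intro tendsto_mult_left uv_lim)
      next
        case nF: False
        then have "c s (pistar s) s' = 0" using c_zero_outside[OF s s'] False by simp
        then show ?thesis by simp
      qed
    qed
  qed
  have "(\<Sum>s'\<in>R. c s (pistar s) s' * Lf s') \<le> Lv s"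
    by (rule LIMSEQ_le_const2[OF lim]) (use RHS_le[OF sF] in auto)
  then show ?thesis using sF False by (simp add: Tpol_def Lf_def)
qed


lemma occ_sd_Suc:
  assumes "s \<in> R"
  shows "occ S p (hr_of_sd \<pi>) s s'' (Suc t) = (\<Sum>s'\<in>R. p s (\<pi> s) s' * occ S p (hr_of_sd \<pi>) s' s'' t)"
proof -
  have "hr_of_sd \<pi> [] s a = (if a = \<pi> s then 1 else 0)" for a by (simp add: hr_of_sd_def)
  then show ?thesis using assms by (simp add: occ_Suc sum_ind)
qed

definition Dv :: "(nat \<Rightarrow> 'a) \<Rightarrow> nat \<Rightarrow> nat \<Rightarrow> real" where
  "Dv \<pi> t s = (\<Sum>s''\<in>N. occ S p (hr_of_sd \<pi>) s s'' t)"

lemma Dv_Suc: assumes "s \<in> R" shows "Dv \<pi> (Suc t) s = (\<Sum>s'\<in>R. p s (\<pi> s) s' * Dv \<pi> t s')"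
proof -
  have "Dv \<pi> (Suc t) s = (\<Sum>s''\<in>N. \<Sum>s'\<in>R. p s (\<pi> s) s' * occ S p (hr_of_sd \<pi>) s' s'' t)"
    unfolding Dv_def using occ_sd_Suc[OF assms] by simp
  also have "\<dots> = (\<Sum>s'\<in>R. \<Sum>s''\<in>N. p s (\<pi> s) s' * occ S p (hr_of_sd \<pi>) s' s'' t)"
    by (rule sum.swap)
  also have "\<dots> = (\<Sum>s'\<in>R. p s (\<pi> s) s' * Dv \<pi> t s')"
    unfolding Dv_def by (simp add: sum_distrib_left)
  finally show ?thesis .
qed

lemma Dv_0: assumes "s \<in> N" shows "Dv \<pi> 0 s = 1"
proof -
  have "Dv \<pi> 0 s = (\<Sum>s''\<in>N. if s = s'' then 1 else 0)"
    unfolding Dv_def using assms by (intro sum.cong) (auto simp: occ_0)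
  also have "\<dots> = 1" using assms by simp
  finally show ?thesis .
qed

lemma Tpow_Suc_ge:
  assumes s: "s \<in> R" and s': "s' \<in> R" and f: "\<And>x. x \<in> R \<Longrightarrow> 0 \<le> f x"
  shows "c s (\<pi> s) s' * (Tpol \<pi> ^^ k) f s' \<le> (Tpol \<pi> ^^ Suc k) f s"
proof -
  have "c s (\<pi> s) s' * (Tpol \<pi> ^^ k) f s' \<le> (\<Sum>x\<in>R. c s (\<pi> s) x * (Tpol \<pi> ^^ k) f x)"
    by (rule member_le_sum[OF s']) (auto intro!: mult_nonneg_nonneg c_nonneg[OF s] Tpow_nonneg f)
  then show ?thesis by (simp add: Tpol_def)
qed

lemma stuck:
  assumes "s \<in> N" "\<forall>k. (Tpol \<pi> ^^ k) u0 s = 0"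
  shows "Dv \<pi> t s = 1"
  using assms
proof (induction t arbitrary: s)
  case 0 then show ?case using Dv_0 by blast
next
  case (Suc t)
  have sR: "s \<in> R" using Suc.prems by auto
  have u0nn: "\<And>x. x \<in> R \<Longrightarrow> 0 \<le> u0 x" by (simp add: u0_def)
  have "Dv \<pi> (Suc t) s = (\<Sum>s'\<in>R. p s (\<pi> s) s' * Dv \<pi> t s')" by (rule Dv_Suc[OF sR])
  also have "\<dots> = (\<Sum>s'\<in>R. p s (\<pi> s) s')"
  proof (rule sum.cong[OF refl])
    fix s' assume s': "s' \<in> R"
    show "p s (\<pi> s) s' * Dv \<pi> t s' = p s (\<pi> s) s'"
    proof (cases "p s (\<pi> s) s' > 0")
      case False
      then have "p s (\<pi> s) s' = 0" using p_nonneg[OF sR s', of "\<pi> s"] by linarith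
      then show ?thesis by simp
    next
      case True
      then have cpos: "0 < c s (\<pi> s) s'" by (simp add: c_pos_iff)
      have "s' \<noteq> e"
      proof
        assume "s' = e"
        then have "c s (\<pi> s) s' * (Tpol \<pi> ^^ 0) u0 s' = c s (\<pi> s) s'" by (simp add: u0_def)
        moreover have "c s (\<pi> s) s' * (Tpol \<pi> ^^ 0) u0 s' \<le> (Tpol \<pi> ^^ Suc 0) u0 s"
          by (rule Tpow_Suc_ge[OF sR s' u0nn])
        moreover have "(Tpol \<pi> ^^ Suc 0) u0 s = 0" using Suc.prems(2) by blast
        ultimately show False using cpos by simp
      qed
      then have s'N: "s' \<in> N" using s' by auto
      have "\<forall>k. (Tpol \<pi> ^^ k) u0 s' = 0"
      proof
        fix k
        have "c s (\<pi> s) s' * (Tpol \<pi> ^^ k) u0 s' \<le> (Tpol \<pi> ^^ Suc k) u0 s"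
          by (rule Tpow_Suc_ge[OF sR s' u0nn])
        moreover have "(Tpol \<pi> ^^ Suc k) u0 s = 0" using Suc.prems(2) by blast
        ultimately have "c s (\<pi> s) s' * (Tpol \<pi> ^^ k) u0 s' \<le> 0" by linarith
        moreover have "0 \<le> (Tpol \<pi> ^^ k) u0 s'" by (rule Tpow_nonneg[OF u0nn s'])
        ultimately show "(Tpol \<pi> ^^ k) u0 s' = 0" using cpos
          by (simp add: mult_le_0_iff)
      qed
      then have "Dv \<pi> t s' = 1" using Suc.IH[OF s'N] by simp
      then show ?thesis by simp
    qed
  qed
  also have "\<dots> = 1" by (rule p_sum[OF sR])
  finally show ?case .
qed

lemma exists_exit: assumes s: "s \<in> N" shows "\<exists>k. 0 < (Tpol \<pi> ^^ k) u0 s"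
proof (rule ccontr)
  assume "\<not> (\<exists>k. 0 < (Tpol \<pi> ^^ k) u0 s)"
  moreover have "\<And>k. 0 \<le> (Tpol \<pi> ^^ k) u0 s" using s by (intro Tpow_nonneg) (auto simp: u0_def)
  ultimately have "\<forall>k. (Tpol \<pi> ^^ k) u0 s = 0" by (simp add: order.order_iff_strict)
  then have one: "\<And>t. Dv \<pi> t s = 1" using stuck[OF s] by blast
  have "(\<lambda>t. Dv \<pi> t s) \<longlonglongrightarrow> (\<Sum>s''\<in>N. 0)"
    unfolding Dv_def
  proof (rule tendsto_sum)
    fix s'' assume "s'' \<in> N"
    then have "summable (\<lambda>t. occ S p (hr_of_sd \<pi>) s s'' t)"
      using is_trans s unfolding transient_def by blast
    then show "(\<lambda>t. occ S p (hr_of_sd \<pi>) s s'' t) \<longlonglongrightarrow> 0" by (rule summable_LIMSEQ_zero)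
  qed
  then have "(\<lambda>t. 1::real) \<longlonglongrightarrow> 0" using one by simp
  then show False using LIMSEQ_unique[OF tendsto_const] by fastforce
qed

abbreviation "Tp \<equiv> Tpol pistar"

definition mv :: "nat \<Rightarrow> nat \<Rightarrow> real" where "mv t = (Tp ^^ t) u0"

lemma mv_le_Lf: assumes s: "s \<in> G" shows "mv t s \<le> Lf s"
proof -
  have A: "(Tp ^^ t) Lf s \<le> Lf s" if "s \<in> G" for s using that
  proof (induction t arbitrary: s)
    case 0 then show ?case by simp
  next
    case (Suc t)
    have "(Tp ^^ Suc t) Lf s = Tp ((Tp ^^ t) Lf) s" by simp
    also have "\<dots> \<le> Tp Lf s" by (rule Tpol_mono_on[OF closedG Suc.IH Suc.prems])
    also have "\<dots> \<le> Lf s" by (rule Tpol_Lf[OF Suc.prems])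
    finally show ?case .
  qed
  have B: "mv t s \<le> (Tp ^^ t) Lf s" unfolding mv_def
  proof (rule Tpow_mono_on[OF closedG _ s])
    fix s assume "s \<in> G"
    then show "u0 s \<le> Lf s"
      using uv_le_Lv[of s 0] uv_nonneg[of s 0] Fset_sub by (auto simp: u0_def Lf_def)
  qed
  show ?thesis using A[OF s] B by linarith
qed

lemma mv_nonneg: "s \<in> R \<Longrightarrow> 0 \<le> mv t s"
  unfolding mv_def by (rule Tpow_nonneg) (auto simp: u0_def)

lemma mv_mono: "s \<in> R \<Longrightarrow> mv t s \<le> mv (Suc t) s"
proof (induction t arbitrary: s)
  case 0
  show ?case
  proof (cases "s = e")
    case True then show ?thesis by (simp add: mv_def Tpol_e)
  next
    case False then show ?thesis using mv_nonneg[OF 0, of 1] by (simp add: mv_def u0_def)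
  qed
next
  case (Suc t)
  have "mv (Suc t) s = Tp (mv t) s" by (simp add: mv_def)
  also have "\<dots> \<le> Tp (mv (Suc t)) s" by (rule Tpol_mono_on[OF closed_R Suc.IH Suc.prems])
  also have "\<dots> = mv (Suc (Suc t)) s" by (simp add: mv_def)
  finally show ?case .
qed

lemma mv_mono_le: "s \<in> R \<Longrightarrow> t \<le> t' \<Longrightarrow> mv t s \<le> mv t' s"
  using incseq_SucI[of "\<lambda>t. mv t s"] mv_mono by (simp add: incseq_def)

lemma mv_e: "mv t e = 1" by (simp add: mv_def Tpow_e u0_def)

definition n0 :: nat where "n0 = Max ((\<lambda>s. SOME k. 0 < mv k s) ` Fset)"

lemma finite_Fset: "finite Fset" using Fset_sub finite_subset by blast

lemma mv_n0_pos: assumes s: "s \<in> Fset" shows "0 < mv n0 s"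
proof -
  have sN: "s \<in> N" using s Fset_sub by auto
  have "\<exists>k. 0 < mv k s" using exists_exit[OF sN] by (simp add: mv_def)
  then have k: "0 < mv (SOME k. 0 < mv k s) s" by (rule someI_ex)
  have "(SOME k. 0 < mv k s) \<le> n0" unfolding n0_def using s finite_Fset by auto
  then have "mv (SOME k. 0 < mv k s) s \<le> mv n0 s" using sN by (intro mv_mono_le) auto
  then show ?thesis using k by linarith
qed

definition \<delta> :: real where "\<delta> = (if Fset = {} then 1 else Min (mv n0 ` Fset))"

lemma delta_pos: "0 < \<delta>"
  unfolding \<delta>_def using finite_Fset mv_n0_pos by auto

lemma delta_le: "s \<in> Fset \<Longrightarrow> \<delta> \<le> mv n0 s"
  unfolding \<delta>_def using finite_Fset by auto

definition oneN :: "nat \<Rightarrow> real" where "oneN s = (if s = e then 0 else 1)"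

definition zv :: "nat \<Rightarrow> nat \<Rightarrow> real" where "zv t = (Tp ^^ t) oneN"

lemma zv_nonneg: "s \<in> R \<Longrightarrow> 0 \<le> zv t s"
  unfolding zv_def by (rule Tpow_nonneg) (auto simp: oneN_def)

lemma zv_le: assumes s: "s \<in> G"
  shows "zv t s \<le> (1/\<delta>) * mv (t + n0) s + (- 1/\<delta>) * mv t s"
proof -
  have "zv t s \<le> (Tp ^^ t) (\<lambda>s. (1/\<delta>) * mv n0 s + (- 1/\<delta>) * u0 s) s"
    unfolding zv_def
  proof (rule Tpow_mono_on[OF closedG _ s])
    fix s assume s: "s \<in> G"
    show "oneN s \<le> (1/\<delta>) * mv n0 s + (- 1/\<delta>) * u0 s"
    proof (cases "s = e")
      case True then show ?thesis by (simp add: oneN_def u0_def mv_e)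
    next
      case False
      then have "s \<in> Fset" using s by simp
      then have "\<delta> \<le> mv n0 s" by (rule delta_le)
      then show ?thesis using False delta_pos by (simp add: oneN_def u0_def field_simps)
    qed
  qed
  also have "\<dots> = (1/\<delta>) * (Tp ^^ t) (mv n0) s + (- 1/\<delta>) * (Tp ^^ t) u0 s"
    by (simp only: Tpow_lin)
  also have "\<dots> = (1/\<delta>) * mv (t + n0) s + (- 1/\<delta>) * mv t s"
    by (simp add: mv_def funpow_add)
  finally show ?thesis .
qed

lemma zv_lim: assumes s: "s \<in> Fset" shows "(\<lambda>t. zv t s) \<longlonglongrightarrow> 0"
proof -
  have sR: "s \<in> R" using s Fset_sub by auto
  have bdd: "bdd_above (range (\<lambda>t. mv t s))"
    using mv_le_Lf[of s] s by (intro bdd_aboveI2) auto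
  have inc: "incseq (\<lambda>t. mv t s)" using mv_mono[OF sR] by (rule incseq_SucI)
  have lim: "(\<lambda>t. mv t s) \<longlonglongrightarrow> (SUP t. mv t s)" by (rule LIMSEQ_incseq_SUP[OF bdd inc])
  have lim2: "(\<lambda>t. mv (t + n0) s) \<longlonglongrightarrow> (SUP t. mv t s)"
    using LIMSEQ_ignore_initial_segment[OF lim, of n0] .
  have "(\<lambda>t. (1/\<delta>) * mv (t + n0) s + (- 1/\<delta>) * mv t s) \<longlonglongrightarrow>
      (1/\<delta>) * (SUP t. mv t s) + (- 1/\<delta>) * (SUP t. mv t s)"
    by (intro tendsto_intros lim lim2)
  then have up: "(\<lambda>t. (1/\<delta>) * mv (t + n0) s + (- 1/\<delta>) * mv t s) \<longlonglongrightarrow> 0"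
    by (simp add: field_simps)
  show ?thesis
    by (rule tendsto_sandwich[OF _ _ tendsto_const up]) (use zv_nonneg[OF sR] zv_le s in auto)
qed

lemma W_split: "s \<in> R \<Longrightarrow> W (hr_of_sd pistar) t s = mv t s + zv t s"
proof -
  assume s: "s \<in> R"
  have "(\<lambda>_. 1::real) = (\<lambda>s. 1 * u0 s + 1 * oneN s)" by (auto simp: u0_def oneN_def)
  then have "W (hr_of_sd pistar) t s = (Tp ^^ t) (\<lambda>s. 1 * u0 s + 1 * oneN s) s"
    using s by (simp only: W_sd_pow)
  also have "\<dots> = 1 * (Tp ^^ t) u0 s + 1 * (Tp ^^ t) oneN s" by (simp only: Tpow_lin)
  finally show ?thesis by (simp add: mv_def zv_def)
qed

lemma conv_F:
  assumes s: "s \<in> Fset"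
  shows "(\<lambda>t. wv t s) \<longlonglongrightarrow> Lv s" and "(\<lambda>t. W (hr_of_sd pistar) t s) \<longlonglongrightarrow> Lv s"
    and "0 < Lv s"
proof -
  have sR: "s \<in> R" using s Fset_sub by auto
  have up: "(\<lambda>t. Lv s + zv t s) \<longlonglongrightarrow> Lv s"
    using tendsto_add[OF tendsto_const zv_lim[OF s], of "Lv s"] by simp
  have W_le: "W (hr_of_sd pistar) t s \<le> Lv s + zv t s" for t
    using W_split[OF sR, of t] mv_le_Lf[of s t] s Fset_sub by (auto simp: Lf_def)
  have W_ge': "wv t s \<le> W (hr_of_sd pistar) t s" for t
    by (rule W_ge[OF _ sR]) (simp add: sd_md valid_md)
  have wv_le: "wv t s \<le> Lv s + zv t s" for t using W_ge'[of t] W_le[of t] by linarith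
  show "(\<lambda>t. wv t s) \<longlonglongrightarrow> Lv s"
    by (rule tendsto_sandwich[OF _ _ uv_lim[OF s] up]) (use uv_le_wv[OF sR] wv_le in \<open>auto intro: always_eventually\<close>)
  have uv_le: "uv t s \<le> W (hr_of_sd pistar) t s" for t using W_ge'[of t] uv_le_wv[OF sR, of t] by linarith
  show "(\<lambda>t. W (hr_of_sd pistar) t s) \<longlonglongrightarrow> Lv s"
    by (rule tendsto_sandwich[OF _ _ uv_lim[OF s] up]) (use uv_le W_le in \<open>auto intro: always_eventually\<close>)
  show "0 < Lv s" using mv_n0_pos[OF s] mv_le_Lf[of s n0] s Fset_sub by (auto simp: Lf_def)
qed

lemma conv_notF:
  assumes s: "s \<in> N" "s \<notin> Fset"
  shows "filterlim (\<lambda>t. wv t s) at_top sequentially"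
    and "filterlim (\<lambda>t. W (hr_of_sd pistar) t s) at_top sequentially"
proof -
  have sR: "s \<in> R" using s by auto
  have W_ge': "wv t s \<le> W (hr_of_sd pistar) t s" for t
    by (rule W_ge[OF _ sR]) (simp add: sd_md valid_md)
  show 1: "filterlim (\<lambda>t. wv t s) at_top sequentially"
    by (rule filterlim_at_top_mono[OF uv_top[OF s]]) (use uv_le_wv[OF sR] in auto)
  show "filterlim (\<lambda>t. W (hr_of_sd pistar) t s) at_top sequentially"
    by (rule filterlim_at_top_mono[OF 1]) (use W_ge' in auto)
qed

end

context ermdp
begin

lemma phi_lim_pos:
  assumes "f \<longlonglongrightarrow> L" "0 < L"
  shows "(\<lambda>t. ereal (- (1/\<beta>) * ln (f t))) \<longlonglongrightarrow> ereal (- (1/\<beta>) * ln L)"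
proof -
  have "(\<lambda>t. ln (f t)) \<longlonglongrightarrow> ln L" by (rule tendsto_ln[OF assms(1)]) (use assms(2) in simp)
  then have "(\<lambda>t. - (1/\<beta>) * ln (f t)) \<longlonglongrightarrow> - (1/\<beta>) * ln L" by (intro tendsto_mult_left)
  then show ?thesis by (simp add: lim_ereal)
qed

lemma phi_lim_top:
  assumes "filterlim f at_top sequentially"
  shows "(\<lambda>t. ereal (- (1/\<beta>) * ln (f t))) \<longlonglongrightarrow> -\<infinity>"
proof -
  have ln_top: "filterlim (\<lambda>t. ln (f t)) at_top sequentially"
    by (rule filterlim_compose[OF ln_at_top assms])
  show ?thesis unfolding tendsto_MInfty
  proof
    fix rr :: real
    have "eventually (\<lambda>t. - \<beta> * rr + 1 \<le> ln (f t)) sequentially"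
      using ln_top by (simp add: filterlim_at_top)
    then show "eventually (\<lambda>t. ereal (- (1/\<beta>) * ln (f t)) < ereal rr) sequentially"
    proof (rule eventually_mono)
      fix t assume "- \<beta> * rr + 1 \<le> ln (f t)"
      then have "- \<beta> * rr < ln (f t)" by linarith
      then have "- (ln (f t)) / \<beta> < rr" using beta_pos by (simp add: field_simps)
      then show "ereal (- (1/\<beta>) * ln (f t)) < ereal rr" by simp
    qed
  qed
qed

definition Lam :: "nat \<Rightarrow> ereal" where
  "Lam s = (if s \<in> Fset then ereal (- (1/\<beta>) * ln (Lv s)) else -\<infinity>)"

lemma vstar_lim: assumes s: "s \<in> N" shows "(\<lambda>t. v_star S p r \<beta> t s) \<longlonglongrightarrow> Lam s"
proof -
  have sR: "s \<in> R" using s by auto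
  have eq: "(\<lambda>t. v_star S p r \<beta> t s) = (\<lambda>t. ereal (- (1/\<beta>) * ln (wv t s)))"
    using v_star_eq[OF sR] by auto
  show ?thesis
  proof (cases "s \<in> Fset")
    case True
    then show ?thesis unfolding eq Lam_def using phi_lim_pos[OF conv_F(1)[OF True] conv_F(3)[OF True]] by simp
  next
    case False
    then show ?thesis unfolding eq Lam_def using phi_lim_top[OF conv_notF(1)[OF s False]] by simp
  qed
qed

lemma vpi_lim: assumes s: "s \<in> N"
  shows "(\<lambda>t. ereal (v_fin S p r \<beta> (hr_of_sd pistar) t s)) \<longlonglongrightarrow> Lam s"
proof -
  have eq: "(\<lambda>t. ereal (v_fin S p r \<beta> (hr_of_sd pistar) t s)) = (\<lambda>t. ereal (- (1/\<beta>) * ln (W (hr_of_sd pistar) t s)))"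
    by (simp add: v_fin_W)
  show ?thesis
  proof (cases "s \<in> Fset")
    case True
    then show ?thesis unfolding eq Lam_def using phi_lim_pos[OF conv_F(2)[OF True] conv_F(3)[OF True]] by simp
  next
    case False
    then show ?thesis unfolding eq Lam_def using phi_lim_top[OF conv_notF(2)[OF s False]] by simp
  qed
qed

lemma v_inf_star_Lam: "s \<in> N \<Longrightarrow> v_inf_star S p r \<beta> s = Lam s"
  unfolding v_inf_star_def by (rule lim_imp_Liminf) (auto intro: vstar_lim)

lemma v_inf_pistar_Lam: "s \<in> N \<Longrightarrow> v_inf S p r \<beta> (hr_of_sd pistar) s = Lam s"
  unfolding v_inf_def by (rule lim_imp_Liminf) (auto intro: vpi_lim)

lemma erm_mu_cong: "(\<And>s. s \<in> N \<Longrightarrow> v s = v' s) \<Longrightarrow> erm_mu S \<mu> \<beta> v = erm_mu S \<mu> \<beta> v'"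
proof -
  assume h: "\<And>s. s \<in> N \<Longrightarrow> v s = v' s"
  have 1: "(\<exists>s\<in>N. 0 < \<mu> s \<and> v s = -\<infinity>) = (\<exists>s\<in>N. 0 < \<mu> s \<and> v' s = -\<infinity>)" using h by auto
  have 2: "{s\<in>N. v s \<noteq> \<infinity>} = {s\<in>N. v' s \<noteq> \<infinity>}" using h by auto
  have 3: "(\<Sum>s\<in>{s\<in>N. v s \<noteq> \<infinity>}. \<mu> s * exp (- \<beta> * real_of_ereal (v s))) =
           (\<Sum>s\<in>{s\<in>N. v' s \<noteq> \<infinity>}. \<mu> s * exp (- \<beta> * real_of_ereal (v' s)))"
    unfolding 2 using h by (intro sum.cong) auto
  show ?thesis unfolding erm_mu_def 1 3 ..
qed

definition Zf :: "(nat \<Rightarrow> ereal) \<Rightarrow> real" where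
  "Zf v = (\<Sum>s\<in>{s\<in>N. v s \<noteq> \<infinity>}. \<mu> s * exp (- \<beta> * real_of_ereal (v s)))"

lemma erm_mu_eq: "erm_mu S \<mu> \<beta> v = (if \<exists>s\<in>N. 0 < \<mu> s \<and> v s = -\<infinity> then -\<infinity>
   else if Zf v = 0 then \<infinity> else ereal (- (1/\<beta>) * ln (Zf v)))"
  unfolding erm_mu_def Zf_def Let_def ..

lemma erm_mu_mono:
  assumes h: "\<And>s. s \<in> N \<Longrightarrow> v s \<le> v' s"
  shows "erm_mu S \<mu> \<beta> v \<le> erm_mu S \<mu> \<beta> v'"
proof (cases "\<exists>s\<in>N. 0 < \<mu> s \<and> v s = -\<infinity>")
  case True
  then show ?thesis by (simp add: erm_mu_def)
next
  case False
  then have nv: "\<And>s. s \<in> N \<Longrightarrow> v s \<noteq> -\<infinity>" using mu_pos by auto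
  have nv': "\<And>s. s \<in> N \<Longrightarrow> v' s \<noteq> -\<infinity>" using nv h by (metis MInfty_eq_minfinity ereal_infty_less_eq(2))
  then have F': "\<not> (\<exists>s\<in>N. 0 < \<mu> s \<and> v' s = -\<infinity>)" by auto
  define Z where "Z = Zf v"
  define Z' where "Z' = Zf v'"
  have sub: "{s\<in>N. v' s \<noteq> \<infinity>} \<subseteq> {s\<in>N. v s \<noteq> \<infinity>}"
  proof
    fix s assume "s \<in> {s\<in>N. v' s \<noteq> \<infinity>}"
    then have sN: "s \<in> N" and v's: "v' s \<noteq> \<infinity>" by auto
    have le: "v s \<le> v' s" using h sN .
    have "v s \<noteq> \<infinity>"
    proof
      assume "v s = \<infinity>"
      then have "\<infinity> \<le> v' s" using le by simp
      then show False using v's by simp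
    qed
    then show "s \<in> {s\<in>N. v s \<noteq> \<infinity>}" using sN by simp
  qed
  have "Z' \<le> (\<Sum>s\<in>{s\<in>N. v' s \<noteq> \<infinity>}. \<mu> s * exp (- \<beta> * real_of_ereal (v s)))"
    unfolding Z'_def Zf_def
  proof (rule sum_mono)
    fix s assume s: "s \<in> {s\<in>N. v' s \<noteq> \<infinity>}"
    then have "v s \<noteq> \<infinity>" "v s \<noteq> -\<infinity>" "v' s \<noteq> \<infinity>" "v' s \<noteq> -\<infinity>" using sub nv nv' by auto
    then have "real_of_ereal (v s) \<le> real_of_ereal (v' s)" using h[of s] s
      by (cases "v s"; cases "v' s") auto
    then have "exp (- \<beta> * real_of_ereal (v' s)) \<le> exp (- \<beta> * real_of_ereal (v s))"
      using beta_pos by simp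
    then show "\<mu> s * exp (- \<beta> * real_of_ereal (v' s)) \<le> \<mu> s * exp (- \<beta> * real_of_ereal (v s))"
      using mu_pos[of s] s by (intro mult_left_mono) auto
  qed
  also have "\<dots> \<le> Z" unfolding Z_def Zf_def
    by (rule sum_mono2[OF _ sub]) (auto intro!: mult_nonneg_nonneg less_imp_le[OF mu_pos])
  finally have ZZ: "Z' \<le> Z" .
  have Z'nn: "0 \<le> Z'" unfolding Z'_def Zf_def by (auto intro!: sum_nonneg mult_nonneg_nonneg less_imp_le[OF mu_pos])
  show ?thesis
  proof (cases "Z' = 0")
    case True
    then show ?thesis using F' unfolding erm_mu_eq Z'_def by simp
  next
    case False
    then have "0 < Z'" using Z'nn by simp
    then have "ln Z' \<le> ln Z" "Z \<noteq> 0" using ZZ by auto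
    then have "- (1/\<beta>) * ln Z \<le> - (1/\<beta>) * ln Z'" using beta_pos by (simp add: divide_right_mono)
    then show ?thesis using F' False \<open>Z \<noteq> 0\<close> nv
      unfolding erm_mu_eq Z_def Z'_def by auto
  qed
qed

lemma v_inf_le: "v_inf S p r \<beta> (hr_of_sd \<pi>) s \<le> v_inf_star S p r \<beta> s"
  unfolding v_inf_def v_inf_star_def
proof (rule Liminf_mono[OF always_eventually], rule allI)
  fix t
  show "ereal (v_fin S p r \<beta> (hr_of_sd \<pi>) t s) \<le> v_star S p r \<beta> t s"
    unfolding v_star_def sd_md by (rule SUP_upper) simp
qed

lemma g_inf_eq: "g_inf_star S p r \<mu> \<beta> = erm_mu S \<mu> \<beta> (v_inf_star S p r \<beta>)"
proof -
  have cong: "erm_mu S \<mu> \<beta> (v_inf_star S p r \<beta>) = erm_mu S \<mu> \<beta> Lam"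
    by (rule erm_mu_cong) (rule v_inf_star_Lam)
  have gs: "g_star S p r \<mu> \<beta> = (\<lambda>t. ereal (- (1/\<beta>) * ln (\<Sum>s\<in>N. \<mu> s * wv (Suc t) s)))"
    by (rule ext) (rule g_star_eq)
  have lim: "g_star S p r \<mu> \<beta> \<longlonglongrightarrow> erm_mu S \<mu> \<beta> Lam"
  proof (cases "Fset = N")
    case True
    have LamF: "\<And>s. s \<in> N \<Longrightarrow> Lam s = ereal (- (1/\<beta>) * ln (Lv s))" using True by (simp add: Lam_def)
    have Lpos: "\<And>s. s \<in> N \<Longrightarrow> 0 < Lv s" using True conv_F(3) by auto
    have set_eq: "{s\<in>N. Lam s \<noteq> \<infinity>} = N" using LamF by auto
    have Zeq: "Zf Lam = (\<Sum>s\<in>N. \<mu> s * Lv s)"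
      unfolding Zf_def set_eq
    proof (rule sum.cong[OF refl])
      fix s assume s: "s \<in> N"
      have "- \<beta> * (- (1/\<beta>) * ln (Lv s)) = ln (Lv s)" using beta_pos by simp
      then show "\<mu> s * exp (- \<beta> * real_of_ereal (Lam s)) = \<mu> s * Lv s"
        using LamF[OF s] Lpos[OF s] by simp
    qed
    have Zpos: "0 < (\<Sum>s\<in>N. \<mu> s * Lv s)"
    proof (rule sum_pos2[of _ 1])
      show "1 \<in> N" using S_pos by simp
      show "0 < \<mu> 1 * Lv 1" using S_pos by (intro mult_pos_pos mu_pos Lpos) auto
      fix i assume "i \<in> N" then show "0 \<le> \<mu> i * Lv i"
        by (intro mult_nonneg_nonneg less_imp_le mu_pos Lpos) auto
    qed simp
    have nm: "\<not> (\<exists>s\<in>N. 0 < \<mu> s \<and> Lam s = -\<infinity>)" using LamF by auto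
    have erm: "erm_mu S \<mu> \<beta> Lam = ereal (- (1/\<beta>) * ln (\<Sum>s\<in>N. \<mu> s * Lv s))"
      unfolding erm_mu_eq Zeq using nm Zpos by simp
    have "(\<lambda>t. \<Sum>s\<in>N. \<mu> s * wv (Suc t) s) \<longlonglongrightarrow> (\<Sum>s\<in>N. \<mu> s * Lv s)"
    proof (intro tendsto_sum tendsto_mult_left)
      fix s assume "s \<in> N"
      then have "s \<in> Fset" using True by simp
      then show "(\<lambda>t. wv (Suc t) s) \<longlonglongrightarrow> Lv s" using conv_F(1) LIMSEQ_Suc by blast
    qed
    then show ?thesis unfolding gs erm by (rule phi_lim_pos[OF _ Zpos])
  next
    case False
    have "\<exists>s0. s0 \<in> N \<and> s0 \<notin> Fset" using False Fset_sub by blast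
    then obtain s0 where s0: "s0 \<in> N" "s0 \<notin> Fset" by blast
    have erm: "erm_mu S \<mu> \<beta> Lam = -\<infinity>"
      unfolding erm_mu_eq using s0 mu_pos[OF s0(1)] by (auto simp: Lam_def)
    have top1: "filterlim (\<lambda>t. \<mu> s0 * wv (Suc t) s0) at_top sequentially"
    proof (rule filterlim_tendsto_pos_mult_at_top[OF tendsto_const mu_pos[OF s0(1)]])
      show "filterlim (\<lambda>t. wv (Suc t) s0) at_top sequentially"
        using conv_notF(1)[OF s0] filterlim_sequentially_Suc[of "\<lambda>t. wv t s0"] by simp
    qed
    have "filterlim (\<lambda>t. \<Sum>s\<in>N. \<mu> s * wv (Suc t) s) at_top sequentially"
    proof (rule filterlim_at_top_mono[OF top1 always_eventually], rule allI)
      fix t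
      show "\<mu> s0 * wv (Suc t) s0 \<le> (\<Sum>s\<in>N. \<mu> s * wv (Suc t) s)"
      proof (rule member_le_sum[OF s0(1)])
        fix x assume "x \<in> N - {s0}"
        then have x: "x \<in> N" by simp
        then have "0 < \<mu> x" "0 < wv (Suc t) x" using mu_pos wv_pos by auto
        then show "0 \<le> \<mu> x * wv (Suc t) x" by simp
      qed simp
    qed
    then show ?thesis unfolding gs erm by (rule phi_lim_top)
  qed
  have "g_inf_star S p r \<mu> \<beta> = erm_mu S \<mu> \<beta> Lam"
    unfolding g_inf_star_def by (rule lim_imp_Liminf[OF _ lim]) simp
  then show ?thesis using cong by simp
qed

lemma main:
  "\<exists>\<pi>s::nat \<Rightarrow> 'a.
           (\<forall>s\<in>{1..S}. v_inf_star S p r \<beta> s = v_inf S p r \<beta> (hr_of_sd \<pi>s) s)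
         \<and> g_inf_star S p r \<mu> \<beta> = erm_mu S \<mu> \<beta> (v_inf_star S p r \<beta>)
         \<and> erm_mu S \<mu> \<beta> (v_inf_star S p r \<beta>)
             = (SUP \<pi>::nat \<Rightarrow> 'a. erm_mu S \<mu> \<beta> (v_inf S p r \<beta> (hr_of_sd \<pi>)))
         \<and> erm_mu S \<mu> \<beta> (v_inf S p r \<beta> (hr_of_sd \<pi>s))
             = (SUP \<pi>::nat \<Rightarrow> 'a. erm_mu S \<mu> \<beta> (v_inf S p r \<beta> (hr_of_sd \<pi>)))"
proof (intro exI conjI)
  show 1: "\<forall>s\<in>{1..S}. v_inf_star S p r \<beta> s = v_inf S p r \<beta> (hr_of_sd pistar) s"
    using v_inf_star_Lam v_inf_pistar_Lam by simp
  show "g_inf_star S p r \<mu> \<beta> = erm_mu S \<mu> \<beta> (v_inf_star S p r \<beta>)" by (rule g_inf_eq)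
  have eq: "erm_mu S \<mu> \<beta> (v_inf S p r \<beta> (hr_of_sd pistar)) = erm_mu S \<mu> \<beta> (v_inf_star S p r \<beta>)"
    by (rule erm_mu_cong) (use 1 in simp)
  have sup: "(SUP \<pi>::nat \<Rightarrow> 'a. erm_mu S \<mu> \<beta> (v_inf S p r \<beta> (hr_of_sd \<pi>))) = erm_mu S \<mu> \<beta> (v_inf_star S p r \<beta>)"
  proof (rule antisym)
    show "(SUP \<pi>::nat \<Rightarrow> 'a. erm_mu S \<mu> \<beta> (v_inf S p r \<beta> (hr_of_sd \<pi>))) \<le> erm_mu S \<mu> \<beta> (v_inf_star S p r \<beta>)"
      by (rule SUP_least) (rule erm_mu_mono[OF v_inf_le])
    show "erm_mu S \<mu> \<beta> (v_inf_star S p r \<beta>) \<le> (SUP \<pi>::nat \<Rightarrow> 'a. erm_mu S \<mu> \<beta> (v_inf S p r \<beta> (hr_of_sd \<pi>)))"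
      by (rule SUP_upper2[of pistar]) (use eq in simp_all)
  qed
  show "erm_mu S \<mu> \<beta> (v_inf_star S p r \<beta>) = (SUP \<pi>::nat \<Rightarrow> 'a. erm_mu S \<mu> \<beta> (v_inf S p r \<beta> (hr_of_sd \<pi>)))"
    using sup by simp
  show "erm_mu S \<mu> \<beta> (v_inf S p r \<beta> (hr_of_sd pistar)) = (SUP \<pi>::nat \<Rightarrow> 'a. erm_mu S \<mu> \<beta> (v_inf S p r \<beta> (hr_of_sd \<pi>)))"
    using sup eq by simp
qed

end

theorem corollary2:
  fixes S :: nat and p r :: "nat \<Rightarrow> 'a::finite \<Rightarrow> nat \<Rightarrow> real" and \<mu> :: "nat \<Rightarrow> real" and \<beta> :: real
  assumes "0 < \<beta>" and "mdp S p r \<mu>" and "transient S p"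
  shows "\<exists>\<pi>s::nat \<Rightarrow> 'a.
           (\<forall>s\<in>{1..S}. v_inf_star S p r \<beta> s = v_inf S p r \<beta> (hr_of_sd \<pi>s) s)
         \<and> g_inf_star S p r \<mu> \<beta> = erm_mu S \<mu> \<beta> (v_inf_star S p r \<beta>)
         \<and> erm_mu S \<mu> \<beta> (v_inf_star S p r \<beta>)
             = (SUP \<pi>::nat \<Rightarrow> 'a. erm_mu S \<mu> \<beta> (v_inf S p r \<beta> (hr_of_sd \<pi>)))
         \<and> erm_mu S \<mu> \<beta> (v_inf S p r \<beta> (hr_of_sd \<pi>s))
             = (SUP \<pi>::nat \<Rightarrow> 'a. erm_mu S \<mu> \<beta> (v_inf S p r \<beta> (hr_of_sd \<pi>)))"
proof -
  interpret ermdp S p r \<mu> \<beta> by unfold_locales (rule assms)+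
  show ?thesis by (rule main)
qed

end
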